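(* For $k\ge0$ let $\bar H_k\in\mathbb{R}^{p\times p}$ be (random) symmetric matrices with symmetric indefinite factorizations $\bar H_k=P_k^TL_kB_kL_k^TP_k$, and suppose $\bar H_k\to H(\theta^* )$ a.s. Let $B_k=Q_k\Lambda_kQ_k^T$ be an eigendecomposition, $\Lambda_k=\mathrm{diag}(\lambda_{k1},\dots,\lambda_{kp})$, and with a constant threshold $\underline{\tau}>0$ set $\bar\Lambda_k=\mathrm{diag}(\max\{\underline{\tau},|\lambda_{kj}|\})_{j=1}^p$ and $\bar{\bar H}_k=P_k^TL_kQ_k\bar\Lambda_kQ_k^TL_k^TP_k$. Assume the eigenvalues of $H(\theta^* )$ satisfy $0<\underline{\lambda}^*<|\lambda_j(H(\theta^* ))|<\bar\lambda^*<\infty$ for $j=1,\dots,p$. Then there exists $K_2$ such that for all $k>K_2$ the eigenvalues and the condition number of $\bar{\bar H}_k$ are bounded uniformly in $k$.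
   Context: In the factorization: $P_k$ permutation, $B_k$ block diagonal with symmetric $1\times1$ or $2\times2$ blocks, $L_k$ unit lower triangular with entries bounded in magnitude by a fixed constant independent of $k$; hence there are constants $0<\underline{\sigma}\le\bar\sigma$, independent of $k$ and the sample path, with all singular values of $L_k$ in $[\underline{\sigma},\bar\sigma]$. $H(\theta^* )$ is the Hessian of the loss at its minimizer and $\bar H_k$ the running Hessian estimate of a second-order simultaneous-perturbation stochastic approximation algorithm. *)

theory Defs
  imports "HOL-Analysis.Analysis"
begin

definition sym_mat :: "real^'n^'n \<Rightarrow> bool" where
  "sym_mat A \<longleftrightarrow> transpose A = A"

definition perm_mat :: "real^'n^'n \<Rightarrow> bool" where
  "perm_mat P \<longleftrightarrow> (\<exists>\<pi>. \<pi> permutes (UNIV::'n set) \<and>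
       P = (\<chi> i j. if j = \<pi> i then 1 else 0))"

definition unit_lower_tri :: "real^('n::{finite,linorder})^('n::{finite,linorder}) \<Rightarrow> bool" where
  "unit_lower_tri L \<longleftrightarrow> (\<forall>i. L $ i $ i = 1) \<and> (\<forall>i j. i < j \<longrightarrow> L $ i $ j = 0)"

definition block_diag_1_2 :: "real^('n::{finite,linorder})^('n::{finite,linorder}) \<Rightarrow> bool" where
  "block_diag_1_2 B \<longleftrightarrow> sym_mat B \<and>
     (\<exists>\<B> :: 'n set set.
        \<Union>\<B> = UNIV \<and>
        (\<forall>b\<in>\<B>. \<forall>c\<in>\<B>. b \<noteq> c \<longrightarrow> b \<inter> c = {}) \<and>
        (\<forall>b\<in>\<B>. (\<exists>a e. b = {a..e}) \<and> (card b = 1 \<or> card b = 2)) \<and>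
        (\<forall>i j. B $ i $ j \<noteq> 0 \<longrightarrow> (\<exists>b\<in>\<B>. i \<in> b \<and> j \<in> b)))"

definition diagm :: "real^'n \<Rightarrow> real^'n^'n" where
  "diagm v = (\<chi> i j. if i = j then v $ i else 0)"

definition is_eigenvalue :: "real^'n^'n \<Rightarrow> real \<Rightarrow> bool" where
  "is_eigenvalue A mu \<longleftrightarrow> (\<exists>v. v \<noteq> 0 \<and> A *v v = mu *\<^sub>R v)"

definition cond_num :: "real^'n^'n \<Rightarrow> real" where
  "cond_num A = onorm (\<lambda>x. A *v x) * onorm (\<lambda>x. matrix_inv A *v x)"

end

theory Submission imports Defs begin

lemma orth_norm: fixes Q :: "real^'n^'n" assumes "orthogonal_matrix Q" shows "norm (Q *v x) = norm x"
proof -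
  have "orthogonal_transformation ((*v) Q)"
    using assms by (simp add: orthogonal_transformation_matrix matrix_of_matrix_vector_mul)
  thus ?thesis by (simp add: orthogonal_transformation)
qed
lemma perm_orth: fixes P :: "real^'n^'n" assumes "perm_mat P" shows "orthogonal_matrix P"
proof -
  obtain \<pi> where pi: "\<pi> permutes (UNIV::'n set)" and P: "P = (\<chi> i j. if j = \<pi> i then 1 else 0)"
    using assms unfolding perm_mat_def by blast
  have inj: "\<pi> i = \<pi> j \<longleftrightarrow> i = j" for i j using pi by (metis permutes_inj injD)
  have "P ** transpose P = mat 1"
    unfolding P by (simp add: matrix_matrix_mult_def transpose_def mat_def vec_eq_iff if_distrib[of "\<lambda>x. x * _"] inj cong: if_cong)
  thus ?thesis using matrix_left_right_inverse orthogonal_matrix_def by blast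
qed
lemma compact_lower:
  fixes S :: "(real^'n^'m) set"
  assumes "compact S" "\<And>A x. A \<in> S \<Longrightarrow> A *v x = 0 \<Longrightarrow> x = 0"
  shows "\<exists>c>0. \<forall>A\<in>S. \<forall>x. c * norm x \<le> norm (A *v x)"
proof (cases "S = {}")
  case True thus ?thesis by (auto intro: exI[of _ 1])
next
  case False
  let ?K = "S \<times> sphere (0::real^'n) 1"
  have cK: "compact ?K" using assms(1) by (simp add: compact_Times)
  have neK: "?K \<noteq> {}" using False vector_choose_size[of 1, where ?'a="real^'n"] by auto
  have cont: "continuous_on ?K (\<lambda>z. norm (fst z *v snd z))"
    unfolding matrix_vector_mult_def by (intro continuous_intros)
  obtain z0 where z0: "z0 \<in> ?K" and min: "\<And>z. z \<in> ?K \<Longrightarrow> norm (fst z0 *v snd z0) \<le> norm (fst z *v snd z)"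
    using continuous_attains_inf[OF cK neK cont] by blast
  define c where "c = norm (fst z0 *v snd z0)"
  have "snd z0 \<noteq> 0" using z0 by auto
  hence "c > 0" using z0 assms(2)[of "fst z0" "snd z0"] unfolding c_def by (auto simp: mem_Times_iff)
  moreover have "c * norm x \<le> norm (A *v x)" if A: "A \<in> S" for A x
  proof (cases "x = 0")
    case True thus ?thesis by simp
  next
    case False
    let ?u = "(1 / norm x) *\<^sub>R x"
    have "(A, ?u) \<in> ?K" using A False by (simp add: mem_Times_iff)
    hence "c \<le> norm (A *v ?u)" using min unfolding c_def by fastforce
    also have "A *v ?u = (1 / norm x) *\<^sub>R (A *v x)" by (simp add: matrix_vector_mult_scaleR)
    finally have "c \<le> norm (A *v x) / norm x" using False by simp
    thus ?thesis using False by (simp add: field_simps)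
  qed
  ultimately show ?thesis by blast
qed
lemma ult_inj: fixes L :: "real^('n::{finite,linorder})^('n::{finite,linorder})"
  assumes "unit_lower_tri L" "L *v x = 0" shows "x = 0"
proof (rule ccontr)
  assume "x \<noteq> 0"
  then obtain i0 where "x $ i0 \<noteq> 0" by (auto simp: vec_eq_iff)
  let ?I = "{i. x $ i \<noteq> 0}"
  have fin: "finite ?I" by simp
  define i where "i = Min ?I"
  have iI: "i \<in> ?I" unfolding i_def using \<open>x $ i0 \<noteq> 0\<close> by (intro Min_in) auto
  have lt: "x $ j = 0" if "j < i" for j
  proof (rule ccontr)
    assume "x $ j \<noteq> 0"
    hence "i \<le> j" unfolding i_def using Min_le[OF fin] by simp
    thus False using that by simp
  qed
  have "(L *v x) $ i = (\<Sum>j\<in>UNIV. L $ i $ j * x $ j)" by (simp add: matrix_vector_mult_def)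
  also have "\<dots> = L $ i $ i * x $ i + (\<Sum>j\<in>UNIV - {i}. L $ i $ j * x $ j)"
    by (simp add: sum.remove[of UNIV i])
  also have "(\<Sum>j\<in>UNIV - {i}. L $ i $ j * x $ j) = 0"
  proof (rule sum.neutral, rule ballI)
    fix j assume "j \<in> UNIV - {i}"
    hence "j < i \<or> i < j" by auto
    thus "L $ i $ j * x $ j = 0" using lt assms(1) unfolding unit_lower_tri_def by auto
  qed
  finally have "(L *v x) $ i = x $ i" using assms(1) unfolding unit_lower_tri_def by simp
  thus False using assms(2) iI by simp
qed
lemma ult_inj_t: fixes L :: "real^('n::{finite,linorder})^('n::{finite,linorder})"
  assumes "unit_lower_tri L" "transpose L *v x = 0" shows "x = 0"
proof (rule ccontr)
  assume "x \<noteq> 0"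
  then obtain i0 where "x $ i0 \<noteq> 0" by (auto simp: vec_eq_iff)
  let ?I = "{i. x $ i \<noteq> 0}"
  have fin: "finite ?I" by simp
  define i where "i = Max ?I"
  have iI: "i \<in> ?I" unfolding i_def using \<open>x $ i0 \<noteq> 0\<close> by (intro Max_in) auto
  have lt: "x $ j = 0" if "i < j" for j
  proof (rule ccontr)
    assume "x $ j \<noteq> 0"
    hence "j \<le> i" unfolding i_def using Max_ge[OF fin] by simp
    thus False using that by simp
  qed
  have "(transpose L *v x) $ i = (\<Sum>j\<in>UNIV. L $ j $ i * x $ j)" by (simp add: matrix_vector_mult_def transpose_def)
  also have "\<dots> = L $ i $ i * x $ i + (\<Sum>j\<in>UNIV - {i}. L $ j $ i * x $ j)"
    by (simp add: sum.remove[of UNIV i])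
  also have "(\<Sum>j\<in>UNIV - {i}. L $ j $ i * x $ j) = 0"
  proof (rule sum.neutral, rule ballI)
    fix j assume "j \<in> UNIV - {i}"
    hence "j < i \<or> i < j" by auto
    thus "L $ j $ i * x $ j = 0" using lt assms(1) unfolding unit_lower_tri_def by auto
  qed
  finally have "(transpose L *v x) $ i = x $ i" using assms(1) unfolding unit_lower_tri_def by simp
  thus False using assms(2) iI by simp
qed
lemma S_compact: "compact {A :: real^('n::{finite,linorder})^('n::{finite,linorder}). unit_lower_tri A \<and> (\<forall>i j. \<bar>A$i$j\<bar> \<le> M)}"
proof (subst compact_eq_bounded_closed, rule conjI)
  show "bounded {A :: real^('n::{finite,linorder})^('n::{finite,linorder}). unit_lower_tri A \<and> (\<forall>i j. \<bar>A$i$j\<bar> \<le> M)}"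
    unfolding bounded_iff
  proof (intro exI ballI)
    fix A :: "real^('n::{finite,linorder})^('n::{finite,linorder})" assume "A \<in> {A. unit_lower_tri A \<and> (\<forall>i j. \<bar>A$i$j\<bar> \<le> M)}"
    hence b: "\<bar>A$i$j\<bar> \<le> M" for i j by auto
    have "norm A \<le> (\<Sum>i\<in>UNIV. norm (A $ i))" by (simp add: norm_vec_def L2_set_le_sum)
    also have "\<dots> \<le> (\<Sum>i\<in>(UNIV::'n set). (\<Sum>j\<in>(UNIV::'n set). M))"
    proof (rule sum_mono)
      fix i
      have "norm (A $ i) \<le> (\<Sum>j\<in>UNIV. \<bar>A $ i $ j\<bar>)" by (rule norm_le_l1_cart)
      also have "\<dots> \<le> (\<Sum>j\<in>(UNIV::'n set). M)" by (rule sum_mono) (rule b)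
      finally show "norm (A $ i) \<le> (\<Sum>j\<in>(UNIV::'n set). M)" .
    qed
    finally show "norm A \<le> (\<Sum>i\<in>(UNIV::'n set). (\<Sum>j\<in>(UNIV::'n set). M))" .
  qed
next
  have eq: "{A :: real^('n::{finite,linorder})^('n::{finite,linorder}). unit_lower_tri A \<and> (\<forall>i j. \<bar>A$i$j\<bar> \<le> M)}
     = {A. (\<forall>i. A$i$i = 1) \<and> (\<forall>i j. i < j \<longrightarrow> A$i$j = 0) \<and> (\<forall>i j. \<bar>A$i$j\<bar> \<le> M)}"
    by (simp add: unit_lower_tri_def)
  show "closed {A :: real^('n::{finite,linorder})^('n::{finite,linorder}). unit_lower_tri A \<and> (\<forall>i j. \<bar>A$i$j\<bar> \<le> M)}"
    unfolding eq
    by (intro closed_Collect_conj closed_Collect_all closed_Collect_imp closed_Collect_eq closed_Collect_le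
        continuous_intros) auto
qed

lemma compact_lower_t:
  fixes S :: "(real^'n^'n) set"
  assumes "compact S" "\<And>A x. A \<in> S \<Longrightarrow> transpose A *v x = 0 \<Longrightarrow> x = 0"
  shows "\<exists>c>0. \<forall>A\<in>S. \<forall>x. c * norm x \<le> norm (transpose A *v x)"
proof -
  have "compact (transpose ` S)"
    by (rule compact_continuous_image[OF _ assms(1)])
       (unfold transpose_def, intro continuous_intros)
  moreover have "\<And>A x. A \<in> transpose ` S \<Longrightarrow> A *v x = 0 \<Longrightarrow> x = 0" using assms(2) by blast
  ultimately obtain c where c: "c > 0" "\<forall>A\<in>transpose ` S. \<forall>x. c * norm x \<le> norm (A *v x)"
    using compact_lower[of "transpose ` S"] by blast
  have "\<forall>A\<in>S. \<forall>x. c * norm x \<le> norm (transpose A *v x)"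
  proof (intro ballI allI)
    fix A x assume "A \<in> S"
    hence "transpose A \<in> transpose ` S" by (rule imageI)
    thus "c * norm x \<le> norm (transpose A *v x)" using c(2) by blast
  qed
  thus ?thesis using c(1) by blast
qed
lemma mat_inv_props: assumes "invertible (A::real^'n^'n)"
  shows "A ** matrix_inv A = mat 1 \<and> matrix_inv A ** A = mat 1"
  using assms unfolding matrix_inv_def invertible_def by (rule someI_ex)
lemma norm_mv_le: fixes A :: "real^'n^'m" assumes "\<And>i j. \<bar>A$i$j\<bar> \<le> K"
  shows "norm (A *v x) \<le> real CARD('m) * real CARD('n) * K * norm x"
proof -
  have "norm (A *v x) \<le> onorm ((*v) A) * norm x" by (rule onorm) simp
  also have "\<dots> \<le> real CARD('m) * real CARD('n) * K * norm x"
    by (rule mult_right_mono[OF onorm_le_matrix_component[OF assms]]) simp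
  finally show ?thesis .
qed
lemma diag_bounds: fixes d y :: "real^'n" assumes "0 \<le> a" "\<And>j. a \<le> d$j" "\<And>j. d$j \<le> b"
  shows "a * norm y \<le> norm (diagm d *v y) \<and> norm (diagm d *v y) \<le> b * norm y"
proof -
  have e: "diagm d *v y = (\<chi> j. d$j * y$j)"
    by (simp add: vec_eq_iff matrix_vector_mult_def diagm_def if_distrib[of "\<lambda>z. z * _"] cong: if_cong)
  have b0: "0 \<le> b" using assms(1) assms(2)[of undefined] assms(3)[of undefined] by linarith
  have sq: "(a * y$j) * (a * y$j) \<le> (d$j * y$j) * (d$j * y$j)" for j
  proof -
    have "\<bar>a * y$j\<bar> \<le> \<bar>d$j * y$j\<bar>" using assms(1) assms(2)[of j] by (simp add: abs_mult mult_right_mono)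
    hence "(a * y$j)\<^sup>2 \<le> (d$j * y$j)\<^sup>2" by (simp only: abs_le_square_iff)
    thus ?thesis by (simp only: power2_eq_square)
  qed
  have sq2: "(d$j * y$j) * (d$j * y$j) \<le> (b * y$j) * (b * y$j)" for j
  proof -
    have "\<bar>d$j * y$j\<bar> \<le> \<bar>b * y$j\<bar>" using assms(1) assms(2)[of j] assms(3)[of j] b0 by (simp add: abs_mult mult_right_mono)
    hence "(d$j * y$j)\<^sup>2 \<le> (b * y$j)\<^sup>2" by (simp only: abs_le_square_iff)
    thus ?thesis by (simp only: power2_eq_square)
  qed
  have "norm (a *\<^sub>R y) \<le> norm (diagm d *v y)" unfolding norm_le e
    by (simp add: inner_vec_def sum_mono sq)
  moreover have "norm (diagm d *v y) \<le> norm (b *\<^sub>R y)" unfolding norm_le e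
    by (simp add: inner_vec_def sum_mono sq2)
  ultimately show ?thesis using assms(1) b0 by simp
qed
lemma final_bounds: fixes H :: "real^'n^'n"
  assumes c1: "0 < c1" and lo: "\<And>x. c1 * norm x \<le> norm (H *v x)" and up: "\<And>x. norm (H *v x) \<le> C1 * norm x"
  shows "(\<forall>mu. is_eigenvalue H mu \<longrightarrow> c1 \<le> \<bar>mu\<bar> \<and> \<bar>mu\<bar> \<le> max C1 (C1/c1)) \<and> cond_num H \<le> max C1 (C1/c1)"
proof -
  define v where "v = (axis undefined 1 :: real^'n)"
  have v: "norm v = 1" by (simp add: v_def)
  have "c1 * norm v \<le> C1 * norm v" using lo[of v] up[of v] by (rule order_trans)
  hence C1: "c1 \<le> C1" unfolding v by simp
  have eig: "c1 \<le> \<bar>mu\<bar> \<and> \<bar>mu\<bar> \<le> C1" if "is_eigenvalue H mu" for mu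
  proof -
    have "\<exists>w. w \<noteq> 0 \<and> H *v w = mu *\<^sub>R w" using that unfolding is_eigenvalue_def .
    then obtain w where w: "w \<noteq> 0" "H *v w = mu *\<^sub>R w" by (elim exE conjE)
    have nw: "norm (H *v w) = \<bar>mu\<bar> * norm w" unfolding w(2) by (rule norm_scaleR)
    have wp: "norm w > 0" using w(1) by simp
    have "c1 * norm w \<le> \<bar>mu\<bar> * norm w" using lo[of w] unfolding nw .
    hence a: "c1 \<le> \<bar>mu\<bar>" using wp by (rule mult_right_le_imp_le)
    have "\<bar>mu\<bar> * norm w \<le> C1 * norm w" using up[of w] unfolding nw .
    hence b: "\<bar>mu\<bar> \<le> C1" using wp by (rule mult_right_le_imp_le)
    show ?thesis using a b by (rule conjI)
  qed
  have inj: "inj ((*v) H)"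
  proof (rule linear_injective_0[THEN iffD2])
    show "linear ((*v) H)" by simp
    show "\<forall>x. H *v x = 0 \<longrightarrow> x = 0" proof (intro allI impI)
      fix x assume "H *v x = 0"
      hence "c1 * norm x \<le> 0" using lo[of x] by simp
      thus "x = 0" using c1 by (simp add: mult_le_0_iff)
    qed
  qed
  hence inv: "invertible H" using matrix_left_invertible_injective invertible_left_inverse by blast
  have o1: "onorm (\<lambda>x. H *v x) \<le> C1" by (rule onorm_le) (rule up)
  have o2: "onorm (\<lambda>x. matrix_inv H *v x) \<le> 1 / c1"
  proof (rule onorm_le)
    fix x
    have "H *v (matrix_inv H *v x) = x"
      by (metis mat_inv_props[OF inv] matrix_vector_mul_assoc matrix_vector_mul_lid)
    hence "c1 * norm (matrix_inv H *v x) \<le> norm x" using lo[of "matrix_inv H *v x"] by simp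
    thus "norm (matrix_inv H *v x) \<le> 1 / c1 * norm x" using c1 by (simp add: field_simps)
  qed
  have p1: "0 \<le> onorm (\<lambda>x. matrix_inv H *v x)" by (rule onorm_pos_le) simp
  have C10: "0 \<le> C1" using C1 c1 by linarith
  have "cond_num H \<le> C1 * (1 / c1)" unfolding cond_num_def
    by (rule mult_mono[OF o1 o2 C10 p1])
  moreover have "C1 * (1 / c1) \<le> max C1 (C1/c1)" by simp
  ultimately have "cond_num H \<le> max C1 (C1/c1)" by linarith
  moreover have "C1 \<le> max C1 (C1/c1)" by simp
  ultimately show ?thesis using eig order_trans by blast
qed


declare transpose_matrix_vector[simp del]

theorem theoremA4:
  fixes Hbar :: "nat \<Rightarrow> real^('p::{finite,linorder})^('p::{finite,linorder})"
    and P L B Q :: "nat \<Rightarrow> real^('p::{finite,linorder})^('p::{finite,linorder})"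
    and lam :: "nat \<Rightarrow> real^('p::{finite,linorder})"
    and Hstar :: "real^('p::{finite,linorder})^('p::{finite,linorder})"
    and M tau lo hi :: real
  assumes Hbar_sym: "\<And>k. sym_mat (Hbar k)"
    and P_perm: "\<And>k. perm_mat (P k)"
    and L_tri: "\<And>k. unit_lower_tri (L k)"
    and L_bdd: "\<And>k i j. \<bar>L k $ i $ j\<bar> \<le> M"
    and B_blk: "\<And>k. block_diag_1_2 (B k)"
    and fact: "\<And>k. Hbar k = transpose (P k) ** L k ** B k ** transpose (L k) ** P k"
    and Q_orth: "\<And>k. orthogonal_matrix (Q k)"
    and eig: "\<And>k. B k = Q k ** diagm (lam k) ** transpose (Q k)"
    and conv: "Hbar \<longlonglongrightarrow> Hstar"
    and Hstar_sym: "sym_mat Hstar"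
    and tau_pos: "tau > 0"
    and lo_pos: "0 < lo"
    and Hstar_eig: "\<And>mu. is_eigenvalue Hstar mu \<Longrightarrow> lo < \<bar>mu\<bar> \<and> \<bar>mu\<bar> < hi"
  shows "\<exists>K2 c C. 0 < c \<and> (\<forall>k>K2.
           let Hbb = transpose (P k) ** L k ** Q k ** diagm (\<chi> j. max tau \<bar>lam k $ j\<bar>)
                       ** transpose (Q k) ** transpose (L k) ** P k
           in (\<forall>mu. is_eigenvalue Hbb mu \<longrightarrow> c \<le> \<bar>mu\<bar> \<and> \<bar>mu\<bar> \<le> C) \<and> cond_num Hbb \<le> C)"
proof -
  define S where "S = {A :: real^('p::{finite,linorder})^('p::{finite,linorder}). unit_lower_tri A \<and> (\<forall>i j. \<bar>A$i$j\<bar> \<le> M)}"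
  have LS: "L k \<in> S" for k using L_tri L_bdd by (simp add: S_def)
  have cS: "compact S" unfolding S_def by (rule S_compact)
  have i1: "\<And>A x. A \<in> S \<Longrightarrow> A *v x = 0 \<Longrightarrow> x = 0" using ult_inj unfolding S_def by blast
  have i2: "\<And>A x. A \<in> S \<Longrightarrow> transpose A *v x = 0 \<Longrightarrow> x = 0" using ult_inj_t unfolding S_def by blast
  obtain c1 where c1: "c1 > 0" "\<forall>A\<in>S. \<forall>x. c1 * norm x \<le> norm (A *v x)"
    using compact_lower[of S] cS i1 by blast
  obtain c2 where c2: "c2 > 0" "\<forall>A\<in>S. \<forall>x. c2 * norm x \<le> norm (transpose A *v x)"
    using compact_lower_t[of S] cS i2 by blast
  define c where "c = min c1 c2"
  have c: "c > 0" using c1 c2 by (simp add: c_def)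
  have Llo: "c * norm x \<le> norm (L k *v x)" for k x
  proof -
    have "c * norm x \<le> c1 * norm x" by (simp add: c_def mult_right_mono)
    also have "\<dots> \<le> norm (L k *v x)" using c1(2) LS by blast
    finally show ?thesis .
  qed
  have Ltlo: "c * norm x \<le> norm (transpose (L k) *v x)" for k x
  proof -
    have "c * norm x \<le> c2 * norm x" by (simp add: c_def mult_right_mono)
    also have "\<dots> \<le> norm (transpose (L k) *v x)" using c2(2) LS by blast
    finally show ?thesis .
  qed
  define CL where "CL = real CARD('p) * real CARD('p) * M"
  have Lup: "norm (L k *v x) \<le> CL * norm x" for k x
    unfolding CL_def by (rule norm_mv_le) (rule L_bdd)
  have Ltup: "norm (transpose (L k) *v x) \<le> CL * norm x" for k x
    unfolding CL_def by (rule norm_mv_le) (simp add: transpose_def L_bdd)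
  have "Bseq Hbar" using conv convergent_imp_Bseq convergentI by blast
  then obtain R where R: "\<And>k. norm (Hbar k) \<le> R" unfolding Bseq_def by blast
  define CH where "CH = real CARD('p) * real CARD('p) * R"
  have Hup: "norm (Hbar k *v x) \<le> CH * norm x" for k x
    unfolding CH_def
  proof (rule norm_mv_le)
    fix i j
    have "\<bar>Hbar k $ i $ j\<bar> \<le> norm (Hbar k $ i)" by (rule component_le_norm_cart)
    also have "\<dots> \<le> norm (Hbar k)" by (rule Finite_Cartesian_Product.norm_nth_le)
    finally show "\<bar>Hbar k $ i $ j\<bar> \<le> R" using R[of k] by linarith
  qed
  have Po: "orthogonal_matrix (P k)" for k using perm_orth P_perm by blast
  have Pn: "norm (P k *v x) = norm x" "norm (transpose (P k) *v x) = norm x" for k x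
    using orth_norm Po orthogonal_matrix_transpose by blast+
  have Qn: "norm (Q k *v x) = norm x" "norm (transpose (Q k) *v x) = norm x" for k x
    using orth_norm Q_orth orthogonal_matrix_transpose by blast+
  have PPt: "P k *v (transpose (P k) *v w) = w" for k w
    using Po[of k] unfolding orthogonal_matrix_def by (metis matrix_vector_mul_assoc matrix_vector_mul_lid)
  have QtQ: "transpose (Q k) *v (Q k *v w) = w" for k w
    using Q_orth[of k] unfolding orthogonal_matrix_def by (metis matrix_vector_mul_assoc matrix_vector_mul_lid)
  have lamb: "\<bar>lam k $ j\<bar> \<le> CH / c\<^sup>2" for k j
  proof -
    let ?e = "axis j (1::real)"
    let ?u = "Q k *v ?e"
    have nu: "norm ?u = 1" by (simp add: Qn)
    have de: "diagm (lam k) *v ?e = lam k $ j *\<^sub>R ?e"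
      by (simp add: vec_eq_iff matrix_vector_mult_def diagm_def axis_def if_distrib[of "\<lambda>z. z * _"] cong: if_cong)
    have Bu: "B k *v ?u = lam k $ j *\<^sub>R ?u"
      by (simp add: eig matrix_vector_mul_assoc[symmetric] QtQ de matrix_vector_mult_scaleR)
    have invt: "invertible (transpose (L k))"
    proof -
      have "inj ((*v) (transpose (L k)))"
        using i2[OF LS[of k]] by (intro linear_injective_0[THEN iffD2]) auto
      thus ?thesis using matrix_left_invertible_injective invertible_left_inverse by blast
    qed
    define y where "y = matrix_inv (transpose (L k)) *v ?u"
    have Lty: "transpose (L k) *v y = ?u"
      unfolding y_def by (metis mat_inv_props[OF invt] matrix_vector_mul_assoc matrix_vector_mul_lid)
    have ny: "c * norm y \<le> 1" using Ltlo[of y k] Lty nu by simp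
    have "L k *v (B k *v ?u) = P k *v (Hbar k *v (transpose (P k) *v y))"
      by (simp add: fact matrix_vector_mul_assoc[symmetric] PPt Lty[symmetric])
    hence "norm (L k *v (B k *v ?u)) = norm (Hbar k *v (transpose (P k) *v y))" by (simp add: Pn)
    also have "\<dots> \<le> CH * norm y" using Hup Pn by metis
    finally have a: "norm (L k *v (B k *v ?u)) \<le> CH * norm y" .
    have eq: "norm (L k *v (B k *v ?u)) = \<bar>lam k $ j\<bar> * norm (L k *v ?u)"
      by (simp add: Bu matrix_vector_mult_scaleR)
    have cl: "c \<le> norm (L k *v ?u)" using Llo[of ?u k] nu by simp
    have x1: "\<bar>lam k $ j\<bar> * c \<le> \<bar>lam k $ j\<bar> * norm (L k *v ?u)" using cl by (simp add: mult_left_mono)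
    have b: "\<bar>lam k $ j\<bar> * c \<le> CH * norm y" using a eq x1 by linarith
    have x2: "\<bar>lam k $ j\<bar> * c * c \<le> CH * (c * norm y)" using mult_right_mono[OF b, of c] c by (simp add: ac_simps)
    have x3: "norm (Hbar k *v ?u) \<le> CH" using Hup[of k ?u] nu by simp
    have CH0: "CH \<ge> 0" using x3 norm_ge_zero[of "Hbar k *v ?u"] by linarith
    have x4: "CH * (c * norm y) \<le> CH * 1" using ny CH0 by (rule mult_left_mono)
    have "\<bar>lam k $ j\<bar> * c * c \<le> CH" using x2 x4 by linarith
    thus ?thesis using c by (simp add: field_simps power2_eq_square)
  qed
  define b where "b = max tau (CH / c\<^sup>2)"
  have Db: "tau * norm y \<le> norm (diagm (\<chi> j. max tau \<bar>lam k $ j\<bar>) *v y) \<and>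
            norm (diagm (\<chi> j. max tau \<bar>lam k $ j\<bar>) *v y) \<le> b * norm y" for k y
  proof (rule diag_bounds)
    show "0 \<le> tau" using tau_pos by simp
    fix j
    show "tau \<le> (\<chi> j. max tau \<bar>lam k $ j\<bar>) $ j" by simp
    have "max tau \<bar>lam k $ j\<bar> \<le> b" unfolding b_def by (intro max.mono order_refl lamb)
    thus "(\<chi> j. max tau \<bar>lam k $ j\<bar>) $ j \<le> b" by simp
  qed
  define lo1 where "lo1 = c * tau * c"
  define up1 where "up1 = CL * b * CL"
  have lo1: "lo1 > 0" using c tau_pos by (simp add: lo1_def)
  have main: "(\<forall>mu. is_eigenvalue Hbb mu \<longrightarrow> lo1 \<le> \<bar>mu\<bar> \<and> \<bar>mu\<bar> \<le> max up1 (up1/lo1)) \<and> cond_num Hbb \<le> max up1 (up1/lo1)"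
    if Hbb: "Hbb = transpose (P k) ** L k ** Q k ** diagm (\<chi> j. max tau \<bar>lam k $ j\<bar>)
                       ** transpose (Q k) ** transpose (L k) ** P k" for k Hbb
  proof (rule final_bounds[OF lo1])
    fix x
    define D where "D = diagm (\<chi> j. max tau \<bar>lam k $ j\<bar>)"
    define w4 where "w4 = transpose (L k) *v (P k *v x)"
    define w2 where "w2 = D *v (transpose (Q k) *v w4)"
    have e: "Hbb *v x = transpose (P k) *v (L k *v (Q k *v w2))"
      unfolding Hbb w2_def w4_def D_def by (simp only: matrix_vector_mul_assoc[symmetric])
    have n: "norm (Hbb *v x) = norm (L k *v (Q k *v w2))" by (simp add: e Pn)
    have w4: "c * norm x \<le> norm w4" "norm w4 \<le> CL * norm x"
      unfolding w4_def using Ltlo[where k=k and x="P k *v x"] Ltup[where k=k and x="P k *v x"] Pn(1)[where k=k and x=x]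
      by simp_all
    have w2: "tau * norm w4 \<le> norm w2" "norm w2 \<le> b * norm w4"
      unfolding w2_def D_def using Db[where k=k and y="transpose (Q k) *v w4"] Qn(2)[where k=k and x=w4]
      by simp_all
    have h: "c * norm w2 \<le> norm (Hbb *v x)" "norm (Hbb *v x) \<le> CL * norm w2"
      unfolding n using Llo[where k=k and x="Q k *v w2"] Lup[where k=k and x="Q k *v w2"] Qn(1)[where k=k and x=w2]
      by simp_all
    have CL0: "CL \<ge> 0" unfolding CL_def using L_bdd[of 0 undefined undefined] by simp
    have b0: "b \<ge> 0" unfolding b_def using tau_pos by simp
    have "lo1 * norm x = c * (tau * (c * norm x))" by (simp add: lo1_def)
    also have "\<dots> \<le> c * (tau * norm w4)" using w4(1) c tau_pos by (intro mult_left_mono) auto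
    also have "\<dots> \<le> c * norm w2" using w2(1) c by (intro mult_left_mono) auto
    also have "\<dots> \<le> norm (Hbb *v x)" by (rule h(1))
    finally show "lo1 * norm x \<le> norm (Hbb *v x)" .
    have "norm (Hbb *v x) \<le> CL * norm w2" by (rule h(2))
    also have "\<dots> \<le> CL * (b * norm w4)" using w2(2) CL0 by (intro mult_left_mono) auto
    also have "\<dots> \<le> CL * (b * (CL * norm x))" using w4(2) CL0 b0 by (intro mult_left_mono) auto
    also have "\<dots> = up1 * norm x" by (simp add: up1_def ac_simps)
    finally show "norm (Hbb *v x) \<le> up1 * norm x" .
  qed
  have fin: "\<forall>k>(0::nat). let Hbb = transpose (P k) ** L k ** Q k ** diagm (\<chi> j. max tau \<bar>lam k $ j\<bar>)
                       ** transpose (Q k) ** transpose (L k) ** P k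
           in (\<forall>mu. is_eigenvalue Hbb mu \<longrightarrow> lo1 \<le> \<bar>mu\<bar> \<and> \<bar>mu\<bar> \<le> max up1 (up1/lo1)) \<and> cond_num Hbb \<le> max up1 (up1/lo1)"
  proof (intro allI impI)
    fix k :: nat
    show "let Hbb = transpose (P k) ** L k ** Q k ** diagm (\<chi> j. max tau \<bar>lam k $ j\<bar>)
                       ** transpose (Q k) ** transpose (L k) ** P k
           in (\<forall>mu. is_eigenvalue Hbb mu \<longrightarrow> lo1 \<le> \<bar>mu\<bar> \<and> \<bar>mu\<bar> \<le> max up1 (up1/lo1)) \<and> cond_num Hbb \<le> max up1 (up1/lo1)"
      unfolding Let_def by (rule main) (rule refl)
  qed
  show ?thesis
    by (rule exI[of _ 0], rule exI[of _ lo1], rule exI[of _ "max up1 (up1/lo1)"], rule conjI[OF lo1 fin])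
qed

end
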